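(* Let $d\in\mathbb N$, $Q,K\in\mathbb R^{d\times d}$, $A:=K^\top Q/\sqrt d$, $V=I_d$ (so $k=d$), and let $f$ be self-attention with parameters $(A,V)$. Assume $A$ has at least one real eigenvalue; let $\gamma_1\ge\dots\ge\gamma_\delta$ be its real eigenvalues and $\gamma:=\max(-\gamma_\delta,\gamma_1/8)$, and assume $\gamma>0$. Let $R\mapsto n(R)\in\mathbb N$ satisfy $n(R)\sim_{R\to+\infty}\exp(2\gamma R^2)$. Then there exists a function $\theta:[0,+\infty)\to[0,+\infty)$ with $\theta(R)\to1$ as $R\to+\infty$ such that $$\mathrm{Lip}\big(f_{|B_R^{n(R)}}\big)\ge\theta(R)\,\frac{\gamma}{2}\,R^2e^{\gamma R^2}.$$
   Context: For $X=(x_1,\dots,x_n)\in(\mathbb R^d)^n$, $f(X)=\big(V\sum_{j=1}^nP_{ij}x_j\big)_{1\le i\le n}$ with $P_{ij}=\exp(x_i^\top A^\top x_j)/\sum_{l=1}^n\exp(x_i^\top A^\top x_l)$. $B_R$ is the closed ball in $\mathbb R^d$ of center 0, radius $R$; $\mathrm{Lip}(f_{|\mathcal X})=\sup_{X\ne Y\in\mathcal X}\|f(X)-f(Y)\|_F/\|X-Y\|_F$ with the Frobenius norm. $\varphi(R)\sim\psi(R)$ means $\varphi(R)/\psi(R)\to1$. *)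

theory Defs
  imports "HOL-Analysis.Analysis" "HOL-Library.Landau_Symbols"
begin

definition attn_weight :: "real^'d^'d \<Rightarrow> (real^'d) list \<Rightarrow> nat \<Rightarrow> nat \<Rightarrow> real" where
  "attn_weight A X i j =
     exp ((X!i) \<bullet> (transpose A *v (X!j))) /
     (\<Sum>l<length X. exp ((X!i) \<bullet> (transpose A *v (X!l))))"

definition self_attention :: "real^'d^'d \<Rightarrow> real^'d^'k \<Rightarrow> (real^'d) list \<Rightarrow> (real^'k) list" where
  "self_attention A V X =
     map (\<lambda>i. V *v (\<Sum>j<length X. attn_weight A X i j *\<^sub>R (X!j))) [0..<length X]"

definition frob_dist :: "('a::real_normed_vector) list \<Rightarrow> 'a list \<Rightarrow> real" where
  "frob_dist X Y = sqrt (\<Sum>i<length X. (norm (X!i - Y!i))\<^sup>2)"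

text \<open>Lipschitz constant of f restricted to a set S, as a value in [0, +infinity]
  (supremum of difference quotients; 0 if S has fewer than two points).\<close>
definition lip_const :: "('a list \<Rightarrow> ('b::real_normed_vector) list) \<Rightarrow> ('a::real_normed_vector) list set \<Rightarrow> ereal" where
  "lip_const f S = Sup ({0} \<union> {ereal (frob_dist (f X) (f Y) / frob_dist X Y) | X Y. X \<in> S \<and> Y \<in> S \<and> X \<noteq> Y})"

definition ball_seqs :: "nat \<Rightarrow> real \<Rightarrow> (real^'d) list set" where
  "ball_seqs n R = {X. length X = n \<and> set X \<subseteq> cball 0 R}"

definition real_eigenvalues :: "real^'d^'d \<Rightarrow> real set" where
  "real_eigenvalues A = {g. \<exists>v. v \<noteq> 0 \<and> A *v v = g *\<^sub>R v}"

end

theory Submission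
  imports Defs
begin

lemma eig_indep:
  fixes A :: "real^'d^'d" and v :: "real \<Rightarrow> real^'d"
  assumes ev: "\<And>g. g \<in> F \<Longrightarrow> v g \<noteq> 0 \<and> A *v v g = g *\<^sub>R v g"
    and fin: "finite F"
  shows "\<forall>c. (\<Sum>g\<in>F. c g *\<^sub>R v g) = 0 \<longrightarrow> (\<forall>g\<in>F. c g = 0)"
  using fin ev
proof (induction F rule: finite_induct)
  case empty
  then show ?case by simp
next
  case (insert g0 F)
  show ?case
  proof (intro allI impI)
    fix c assume h: "(\<Sum>g\<in>insert g0 F. c g *\<^sub>R v g) = 0"
    have h1: "c g0 *\<^sub>R v g0 + (\<Sum>g\<in>F. c g *\<^sub>R v g) = 0"
      using h insert by simp
    have "A *v (c g0 *\<^sub>R v g0 + (\<Sum>g\<in>F. c g *\<^sub>R v g)) - g0 *\<^sub>R (c g0 *\<^sub>R v g0 + (\<Sum>g\<in>F. c g *\<^sub>R v g)) = 0"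
      using h1 by simp
    moreover have "A *v (c g0 *\<^sub>R v g0 + (\<Sum>g\<in>F. c g *\<^sub>R v g)) = c g0 *\<^sub>R (g0 *\<^sub>R v g0) + (\<Sum>g\<in>F. c g *\<^sub>R (g *\<^sub>R v g))"
      using insert.prems
      by (simp add: matrix_vector_right_distrib matrix_vector_mult_scaleR linear_sum[OF matrix_vector_mul_linear] o_def)
    ultimately have "(\<Sum>g\<in>F. (c g * (g - g0)) *\<^sub>R v g) = 0"
      by (simp add: scaleR_add_right sum_distrib_left scaleR_sum_right algebra_simps sum_subtractf scaleR_diff_left)
    moreover have IH: "\<forall>c. (\<Sum>g\<in>F. c g *\<^sub>R v g) = 0 \<longrightarrow> (\<forall>g\<in>F. c g = 0)"
      using insert.IH insert.prems by auto
    ultimately have z: "\<forall>g\<in>F. c g * (g - g0) = 0"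
      using spec[OF IH, of "\<lambda>g. c g * (g - g0)"] by simp
    then have "\<forall>g\<in>F. c g = 0" using insert.hyps by auto
    then have "c g0 *\<^sub>R v g0 = 0" using h1 by simp
    then have "c g0 = 0" using insert.prems by auto
    then show "\<forall>g\<in>insert g0 F. c g = 0" using \<open>\<forall>g\<in>F. c g = 0\<close> by auto
  qed
qed

lemma eig_finite:
  fixes A :: "real^'d^'d"
  shows "finite (real_eigenvalues A)"
proof (rule ccontr)
  assume inf: "infinite (real_eigenvalues A)"
  obtain B where B: "finite B" "card B = Suc DIM(real^'d)" "B \<subseteq> real_eigenvalues A"
    using infinite_arbitrarily_large[OF inf] by blast
  define v where "v g = (SOME v. v \<noteq> 0 \<and> A *v v = g *\<^sub>R v)" for g
  have ev: "v g \<noteq> 0 \<and> A *v v g = g *\<^sub>R v g" if "g \<in> B" for g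
  proof -
    have "\<exists>v. v \<noteq> 0 \<and> A *v v = g *\<^sub>R v" using that B(3) unfolding real_eigenvalues_def by auto
    then show ?thesis unfolding v_def by (rule someI_ex)
  qed
  have inj: "inj_on v B"
  proof (rule inj_onI)
    fix g h assume gh: "g \<in> B" "h \<in> B" "v g = v h"
    then have "g *\<^sub>R v g = h *\<^sub>R v g" using ev[of g] ev[of h] by metis
    then have "(g - h) *\<^sub>R v g = 0" by (simp add: scaleR_diff_left)
    then show "g = h" using ev[OF gh(1)] by simp
  qed
  have "independent (v ` B)"
    unfolding independent_explicit
  proof (intro conjI allI impI ballI)
    show "finite (v ` B)" using B by simp
    fix c w assume h: "(\<Sum>w\<in>v ` B. c w *\<^sub>R w) = 0" and w: "w \<in> v ` B"
    have "(\<Sum>g\<in>B. c (v g) *\<^sub>R v g) = 0" using h by (simp add: sum.reindex[OF inj])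
    moreover have "\<forall>c. (\<Sum>g\<in>B. c g *\<^sub>R v g) = 0 \<longrightarrow> (\<forall>g\<in>B. c g = 0)"
      by (rule eig_indep[of B v A]) (use ev B in auto)
    ultimately have "\<forall>g\<in>B. c (v g) = 0" by (rule mp[OF spec[where x="\<lambda>g. c (v g)"], rotated])
    then show "c w = 0" using w by auto
  qed
  then have "card (v ` B) \<le> DIM(real^'d)" using independent_bound by blast
  moreover have "card (v ` B) = card B" using card_image[OF inj] .
  ultimately show False using B(2) by simp
qed
lemma sa_length[simp]: "length (self_attention A V X) = length X"
  by (simp add: self_attention_def)

lemma sa_row:
  fixes A :: "real^'d^'d"
  assumes "k < m"
  shows "self_attention A (mat 1) (x # replicate m y) ! Suc k =
   (1/(exp (y \<bullet> (transpose A *v x)) + real m * exp (y \<bullet> (transpose A *v y)))) *\<^sub>R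
   (exp (y \<bullet> (transpose A *v x)) *\<^sub>R x + (real m * exp (y \<bullet> (transpose A *v y))) *\<^sub>R y)"
proof -
  have nt: "[0..<Suc m] ! Suc k = Suc k" using assms by (simp del: upt_Suc)
  have s1: "(\<Sum>l<Suc m. f ((x # replicate m y) ! l)) = f x + real m * f y" for f :: "real^'d \<Rightarrow> real"
  proof -
    have "(\<Sum>l<m. f (replicate m y ! l)) = (\<Sum>l<m. f y)" by (rule sum.cong) auto
    then show ?thesis unfolding sum.lessThan_Suc_shift nth_Cons_0 nth_Cons_Suc by simp
  qed
  have s2: "(\<Sum>l<Suc m. f ((x # replicate m y) ! l)) = f x + real m *\<^sub>R f y" for f :: "real^'d \<Rightarrow> real^'d"
  proof -
    have "(\<Sum>l<m. f (replicate m y ! l)) = (\<Sum>l<m. f y)" by (rule sum.cong) auto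
    then show ?thesis unfolding sum.lessThan_Suc_shift nth_Cons_0 nth_Cons_Suc by (simp add: sum_constant_scaleR del: sum_constant)
  qed
  define X where "X = x # replicate m y"
  define Den where "Den = (\<Sum>l<Suc m. exp (y \<bullet> (transpose A *v X ! l)))"
  have lenX: "length X = Suc m" by (simp add: X_def)
  have Xk: "X ! Suc k = y" using assms by (simp add: X_def)
  have "self_attention A (mat 1) X ! Suc k = (\<Sum>j<Suc m. attn_weight A X (Suc k) j *\<^sub>R X ! j)"
    unfolding self_attention_def lenX using assms by (simp del: upt_Suc add: nt)
  also have "... = (\<Sum>j<Suc m. (\<lambda>z. (exp (y \<bullet> (transpose A *v z)) / Den) *\<^sub>R z) (X ! j))"
    unfolding attn_weight_def Xk lenX Den_def by simp
  also have "... = (exp (y \<bullet> (transpose A *v x)) / Den) *\<^sub>R x + real m *\<^sub>R ((exp (y \<bullet> (transpose A *v y)) / Den) *\<^sub>R y)"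
    unfolding X_def by (rule s2)
  also have "Den = exp (y \<bullet> (transpose A *v x)) + real m * exp (y \<bullet> (transpose A *v y))"
    unfolding Den_def X_def by (rule s1)
  finally show ?thesis unfolding X_def by (simp add: scaleR_add_right divide_inverse mult_ac)
qed

lemma score:
  fixes A :: "real^'d^'d"
  assumes "A *v u = l *\<^sub>R u" "u \<bullet> u = 1"
  shows "(a *\<^sub>R u) \<bullet> (transpose A *v (s *\<^sub>R u)) = l * a * s"
proof -
  have "(a *\<^sub>R u) \<bullet> (transpose A *v (s *\<^sub>R u)) = ((s *\<^sub>R u) v* A) \<bullet> (a *\<^sub>R u)"
    by (simp add: inner_commute)
  also have "... = (s *\<^sub>R u) \<bullet> (A *v (a *\<^sub>R u))" by (rule dot_lmul_matrix)
  also have "... = l * a * s" using assms by (simp add: matrix_vector_mult_scaleR)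
  finally show ?thesis .
qed
lemma lip_lower:
  fixes A :: "real^'d^'d" and u :: "real^'d"
  assumes eig: "A *v u = l *\<^sub>R u" and nu: "norm u = 1" and R: "R > 0" and a: "\<bar>a\<bar> \<le> R"
    and m: "m \<ge> 1"
  defines "D \<equiv> l * a * (- R - a)"
  defines "p \<equiv> exp (l * a * (- R)) / (exp (l * a * (- R)) + real m * exp (l * a * a))"
  shows "ereal (sqrt (real m) * D * p * (1 - p)) \<le> lip_const (self_attention A (mat 1)) (ball_seqs (Suc m) R)"
proof -
  define f where "f = self_attention A (mat 1 :: real^'d^'d)"
  define L where "L = lip_const f (ball_seqs (Suc m) R)"
  have uu: "u \<bullet> u = 1" using nu by (simp add: dot_square_norm)
  have u0: "u \<noteq> 0" using nu by auto
  define e2 where "e2 = exp (l * a * a)"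
  define g where "g t = (exp (l * a * (t - R)) * (t - R) + real m * e2 * a) / (exp (l * a * (t - R)) + real m * e2)" for t
  define Y where "Y t = ((t - R) *\<^sub>R u) # replicate m (a *\<^sub>R u)" for t
  have lenY: "length (Y t) = Suc m" for t by (simp add: Y_def)
  have rowY: "f (Y t) ! Suc k = g t *\<^sub>R u" if "k < m" for t k
  proof -
    have "f (Y t) ! Suc k = (1 / (exp (l * a * (t - R)) + real m * e2)) *\<^sub>R
        (exp (l * a * (t - R)) *\<^sub>R ((t - R) *\<^sub>R u) + (real m * e2) *\<^sub>R (a *\<^sub>R u))"
      unfolding f_def Y_def sa_row[OF that] score[OF eig uu] e2_def by simp
    also have "... = g t *\<^sub>R u"
      unfolding scaleR_add_right scaleR_scaleR scaleR_add_left[symmetric]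
      by (rule arg_cong[where f="\<lambda>c. c *\<^sub>R u"]) (simp add: g_def add_divide_distrib)
    finally show ?thesis .
  qed
  have Epos: "exp (l * a * (t - R)) + real m * e2 > 0" for t
    unfolding e2_def by (simp add: add_pos_nonneg)
  have inball: "Y t \<in> ball_seqs (Suc m) R" if "0 \<le> t" "t \<le> 2 * R" for t
  proof -
    have "norm ((t - R) *\<^sub>R u) \<le> R" using that nu by simp
    moreover have "norm (a *\<^sub>R u) \<le> R" using a nu by simp
    ultimately show ?thesis using m unfolding ball_seqs_def Y_def by auto
  qed
  have Yne: "Y t \<noteq> Y 0" if "t \<noteq> 0" for t
  proof
    assume "Y t = Y 0"
    then have "(t - R) *\<^sub>R u = (0 - R) *\<^sub>R u" unfolding Y_def by simp
    then have "t *\<^sub>R u = 0" by (simp add: algebra_simps)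
    then show False using that u0 by simp
  qed
  have fdY: "frob_dist (Y t) (Y 0) = \<bar>t\<bar>" for t
  proof -
    have "(\<Sum>i<Suc m. (norm (Y t ! i - Y 0 ! i))\<^sup>2) = t\<^sup>2"
      unfolding sum.lessThan_Suc_shift by (simp add: Y_def algebra_simps nu)
    then show ?thesis unfolding frob_dist_def lenY by simp
  qed
  have fdf: "frob_dist (f (Y t)) (f (Y 0)) \<ge> sqrt (real m) * \<bar>g t - g 0\<bar>" for t
  proof -
    have "(\<Sum>k<m. (norm (f (Y t) ! Suc k - f (Y 0) ! Suc k))\<^sup>2) = (\<Sum>k<m. (g t - g 0)\<^sup>2)"
      by (rule sum.cong) (auto simp: rowY nu scaleR_diff_left[symmetric])
    then have "(\<Sum>i<Suc m. (norm (f (Y t) ! i - f (Y 0) ! i))\<^sup>2) \<ge> real m * (g t - g 0)\<^sup>2"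
      unfolding sum.lessThan_Suc_shift by simp
    then have "sqrt (real m * (g t - g 0)\<^sup>2) \<le> frob_dist (f (Y t)) (f (Y 0))"
      unfolding frob_dist_def f_def by (simp add: lenY)
    then show ?thesis by (simp add: real_sqrt_mult)
  qed
  have quot: "ereal (sqrt (real m) * \<bar>(g t - g 0) / (t - 0)\<bar>) \<le> L" if "0 < t" "t < 2 * R" for t
  proof -
    have "ereal (frob_dist (f (Y t)) (f (Y 0)) / frob_dist (Y t) (Y 0)) \<le> L"
    proof -
      have "Y t \<in> ball_seqs (Suc m) R" "Y 0 \<in> ball_seqs (Suc m) R" "Y t \<noteq> Y 0"
        using that inball Yne R by auto
      then have "ereal (frob_dist (f (Y t)) (f (Y 0)) / frob_dist (Y t) (Y 0)) \<in>
         {ereal (frob_dist (f X) (f Z) / frob_dist X Z) | X Z. X \<in> ball_seqs (Suc m) R \<and> Z \<in> ball_seqs (Suc m) R \<and> X \<noteq> Z}"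
        by blast
      then show ?thesis unfolding L_def lip_const_def by (intro Sup_upper) blast
    qed
    moreover have "sqrt (real m) * \<bar>(g t - g 0) / (t - 0)\<bar> \<le> frob_dist (f (Y t)) (f (Y 0)) / frob_dist (Y t) (Y 0)"
      unfolding fdY using that fdf[of t] by (simp add: abs_divide divide_right_mono)
    ultimately show ?thesis by (meson ereal_less_eq(3) order_trans)
  qed
  have pe: "p = exp (l * a * (0 - R)) / (exp (l * a * (0 - R)) + real m * e2)"
    unfolding p_def e2_def by simp
  define e1 where "e1 = exp (l * a * (0 - R))"
  define E where "E = e1 + real m * e2"
  have E0: "E > 0" unfolding E_def e1_def using Epos[of 0] by simp
  have pE: "p = e1 / E" unfolding pe E_def e1_def by simp
  have dN: "((\<lambda>t. exp (l * a * (t - R)) * (t - R) + real m * e2 * a) has_real_derivative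
      (l * a * e1 * (0 - R) + e1)) (at 0)"
    unfolding e1_def by (auto intro!: derivative_eq_intros simp: algebra_simps)
  have dE: "((\<lambda>t. exp (l * a * (t - R)) + real m * e2) has_real_derivative (l * a * e1)) (at 0)"
    unfolding e1_def by (auto intro!: derivative_eq_intros simp: algebra_simps)
  have dg0: "(g has_real_derivative
      (((l * a * e1 * (0 - R) + e1) * E - (e1 * (0 - R) + real m * e2 * a) * (l * a * e1)) / (E * E))) (at 0)"
    unfolding g_def using DERIV_divide[OF dN dE] E0 by (simp add: E_def e1_def)
  have alg: "((l * a * e1 * (0 - R) + e1) * E - (e1 * (0 - R) + real m * e2 * a) * (l * a * e1)) / (E * E)
      = p + D * p * (1 - p)"
  proof -
    have "1 - p = real m * e2 / E" unfolding pE E_def using E0 E_def by (simp add: field_simps)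
    have num: "(l * a * e1 * (0 - R) + e1) * E - (e1 * (0 - R) + real m * e2 * a) * (l * a * e1)
       = e1 * E + l * a * (- R - a) * e1 * (real m * e2)"
      unfolding E_def by (simp add: algebra_simps)
    have "e1 * E / (E * E) = e1 / E" using E0 by simp
    moreover have "l * a * (- R - a) * e1 * (real m * e2) / (E * E) = l * a * (- R - a) * (e1 / E) * (real m * e2 / E)"
      by simp
    ultimately show ?thesis unfolding num add_divide_distrib pE D_def \<open>1 - p = _\<close>[unfolded pE] by simp
  qed
  have dg: "(g has_real_derivative (p + D * p * (1 - p))) (at 0)"
    using dg0 alg by simp
  have lim: "((\<lambda>t. (g t - g 0) / (t - 0)) \<longlongrightarrow> p + D * p * (1 - p)) (at_right 0)"
    using dg unfolding has_field_derivative_iff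
    by (rule tendsto_mono[OF at_le[OF subset_UNIV]])
  have lim2: "((\<lambda>t. ereal (sqrt (real m) * \<bar>(g t - g 0) / (t - 0)\<bar>)) \<longlongrightarrow>
      ereal (sqrt (real m) * \<bar>p + D * p * (1 - p)\<bar>)) (at_right 0)"
    by (intro tendsto_ereal tendsto_mult tendsto_const tendsto_rabs lim)
  have ev: "eventually (\<lambda>t. ereal (sqrt (real m) * \<bar>(g t - g 0) / (t - 0)\<bar>) \<le> L) (at_right 0)"
    unfolding eventually_at_right_field using R quot by (intro exI[of _ "2 * R"]) auto
  have L1: "ereal (sqrt (real m) * \<bar>p + D * p * (1 - p)\<bar>) \<le> L"
    by (rule tendsto_upperbound[OF lim2 ev]) simp
  have p0: "p \<ge> 0" unfolding pE using E0 e1_def by simp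
  have "D * p * (1 - p) \<le> \<bar>p + D * p * (1 - p)\<bar>" using p0 by linarith
  then have "sqrt (real m) * D * p * (1 - p) \<le> sqrt (real m) * \<bar>p + D * p * (1 - p)\<bar>"
    by (simp add: mult.assoc mult_left_mono)
  then show ?thesis using L1 unfolding L_def f_def by (meson ereal_less_eq(3) order_trans)
qed

lemma qlim:
  fixes n :: "real \<Rightarrow> nat" and \<gamma> :: real
  assumes gp: "\<gamma> > 0" and n_asymp: "(\<lambda>R. real (n R)) \<sim>[at_top] (\<lambda>R. exp (2 * \<gamma> * R\<^sup>2))"
  shows "((\<lambda>R. real (n R - 1) * exp (- (2 * \<gamma> * R\<^sup>2))) \<longlongrightarrow> 1) at_top"
proof -
  have l1: "((\<lambda>R. real (n R) / exp (2 * \<gamma> * R\<^sup>2)) \<longlongrightarrow> 1) at_top"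
    using asymp_equivD[OF n_asymp] by simp
  have l0: "((\<lambda>R. exp (- (2 * \<gamma> * R\<^sup>2))) \<longlongrightarrow> 0) at_top"
  proof -
    have f1: "filterlim (\<lambda>R::real. 2 * \<gamma> * R\<^sup>2) at_top at_top"
      using gp by (intro filterlim_tendsto_pos_mult_at_top[OF tendsto_const])
        (auto intro: filterlim_pow_at_top filterlim_ident)
    have "filterlim (\<lambda>R::real. exp (2 * \<gamma> * R\<^sup>2)) at_top at_top"
      by (rule filterlim_compose[OF exp_at_top f1])
    then have "((\<lambda>R. inverse (exp (2 * \<gamma> * R\<^sup>2))) \<longlongrightarrow> 0) at_top"
      by (rule tendsto_inverse_0_at_top)
    then show ?thesis by (simp add: exp_minus)
  qed
  have "eventually (\<lambda>R. real (n R) / exp (2 * \<gamma> * R\<^sup>2) > 1/2) at_top"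
    using l1 by (rule order_tendstoD) simp
  then have ev: "eventually (\<lambda>R. real (n R) / exp (2 * \<gamma> * R\<^sup>2) - exp (- (2 * \<gamma> * R\<^sup>2))
       = real (n R - 1) * exp (- (2 * \<gamma> * R\<^sup>2))) at_top"
  proof (rule eventually_mono)
    fix R assume "real (n R) / exp (2 * \<gamma> * R\<^sup>2) > 1/2"
    then have "n R \<ge> 1" by (cases "n R") auto
    then show "real (n R) / exp (2 * \<gamma> * R\<^sup>2) - exp (- (2 * \<gamma> * R\<^sup>2))
       = real (n R - 1) * exp (- (2 * \<gamma> * R\<^sup>2))"
      by (simp add: of_nat_diff exp_minus divide_inverse algebra_simps)
  qed
  have "((\<lambda>R. real (n R) / exp (2 * \<gamma> * R\<^sup>2) - exp (- (2 * \<gamma> * R\<^sup>2))) \<longlongrightarrow> 1 - 0) at_top"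
    by (intro tendsto_diff l1 l0)
  then show ?thesis using ev by (simp add: tendsto_cong)
qed

theorem mainTheorem6:
  fixes Q K A :: "real^'d^'d" and n :: "real \<Rightarrow> nat" and \<gamma> :: real
  assumes A_def: "A = (1 / sqrt (real CARD('d))) *\<^sub>R (transpose K ** Q)"
    and ev_ne: "real_eigenvalues A \<noteq> {}"
    and gamma_def: "\<gamma> = max (- Min (real_eigenvalues A)) (Max (real_eigenvalues A) / 8)"
    and gamma_pos: "\<gamma> > 0"
    and n_asymp: "(\<lambda>R. real (n R)) \<sim>[at_top] (\<lambda>R. exp (2 * \<gamma> * R\<^sup>2))"
  shows "\<exists>\<theta> :: real \<Rightarrow> real.
           (\<forall>R\<ge>0. \<theta> R \<ge> 0) \<and> (\<theta> \<longlongrightarrow> 1) at_top \<and>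
           (\<forall>R\<ge>0. lip_const (self_attention A (mat 1 :: real^'d^'d)) (ball_seqs (n R) R)
                    \<ge> ereal (\<theta> R * (\<gamma> / 2) * R\<^sup>2 * exp (\<gamma> * R\<^sup>2)))"
proof -
  define S where "S = real_eigenvalues A"
  have finS: "finite S" unfolding S_def by (rule eig_finite)
  obtain l c where lS: "l \<in> S" and c: "\<bar>c\<bar> \<le> 1" and lc: "l * c * (- 1 - c) = 2 * \<gamma>"
  proof (cases "- Min S \<ge> Max S / 8")
    case True
    then have "\<gamma> = - Min S" using gamma_def S_def by simp
    moreover have "Min S \<in> S" using finS ev_ne S_def by simp
    ultimately show ?thesis using that[of "Min S" 1] by simp
  next
    case False
    then have "\<gamma> = Max S / 8" using gamma_def S_def by simp
    moreover have "Max S \<in> S" using finS ev_ne S_def by simp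
    ultimately show ?thesis using that[of "Max S" "-1/2"] by simp
  qed
  obtain v where v: "v \<noteq> 0" "A *v v = l *\<^sub>R v" using lS unfolding S_def real_eigenvalues_def by auto
  define u where "u = (1 / norm v) *\<^sub>R v"
  have nu: "norm u = 1" using v by (simp add: u_def)
  have eig: "A *v u = l *\<^sub>R u" using v by (simp add: u_def matrix_vector_mult_scaleR)
  define q where "q R = real (n R - 1) * exp (- (2 * \<gamma> * R\<^sup>2))" for R
  define \<theta> where "\<theta> R = 4 * sqrt (q R) * q R / (1 + q R)\<^sup>2" for R
  have q0: "q R \<ge> 0" for R unfolding q_def by simp
  have th0: "\<theta> R \<ge> 0" for R unfolding \<theta>_def using q0[of R] by simp
  have qlim': "(q \<longlongrightarrow> 1) at_top" unfolding q_def by (rule qlim[OF gamma_pos n_asymp])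
  have thlim: "(\<theta> \<longlongrightarrow> 1) at_top"
  proof -
    have "(\<theta> \<longlongrightarrow> 4 * sqrt 1 * 1 / (1 + 1)\<^sup>2) at_top"
      unfolding \<theta>_def by (intro tendsto_intros qlim') simp
    then show ?thesis by simp
  qed
  have main: "lip_const (self_attention A (mat 1 :: real^'d^'d)) (ball_seqs (n R) R)
                    \<ge> ereal (\<theta> R * (\<gamma> / 2) * R\<^sup>2 * exp (\<gamma> * R\<^sup>2))" if R: "R \<ge> 0" for R
  proof -
    have Lnn: "ereal 0 \<le> lip_const (self_attention A (mat 1 :: real^'d^'d)) (ball_seqs (n R) R)"
      unfolding lip_const_def by (rule Sup_upper) simp
    show ?thesis
    proof (cases "R > 0 \<and> n R \<ge> 2")
      case False
      then have "R = 0 \<or> n R - 1 = 0" using R by auto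
      then have eq: "\<theta> R * (\<gamma> / 2) * R\<^sup>2 * exp (\<gamma> * R\<^sup>2) = 0"
      proof
        assume "R = 0" then show ?thesis by simp
      next
        assume "n R - 1 = 0"
        then have "q R = 0" by (simp add: q_def)
        then show ?thesis by (simp add: \<theta>_def)
      qed
      show ?thesis using Lnn by (simp only: eq)
    next
      case True
      define m where "m = n R - 1"
      have m1: "m \<ge> 1" and nm: "n R = Suc m" using True by (auto simp: m_def)
      define a where "a = c * R"
      have a: "\<bar>a\<bar> \<le> R" using c R by (simp add: a_def abs_mult mult_left_le_one_le)
      define D where "D = l * a * (- R - a)"
      have "l * (c * R) * (- R - c * R) = (l * c * (- 1 - c)) * R\<^sup>2"
        by (simp add: power2_eq_square algebra_simps)
      then have D: "D = 2 * \<gamma> * R\<^sup>2" unfolding D_def a_def using lc by simp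
      define p where "p = exp (l * a * (- R)) / (exp (l * a * (- R)) + real m * exp (l * a * a))"
      have LL: "ereal (sqrt (real m) * D * p * (1 - p)) \<le> lip_const (self_attention A (mat 1)) (ball_seqs (Suc m) R)"
        unfolding D_def p_def using lip_lower[OF eig nu _ a m1] True by simp
      have qR: "q R = real m * exp (- D)" unfolding q_def D m_def by simp
      have ee: "exp (l * a * a) = exp (l * a * (- R)) * exp (- D)"
        unfolding D_def exp_add[symmetric] by (simp add: algebra_simps)
      have pq: "p = 1 / (1 + q R)"
      proof -
        have gen: "x / (x + real m * (x * e)) = 1 / (1 + real m * e)" if "x > 0" "e \<ge> 0" for x e :: real
        proof -
          have "x + real m * (x * e) = x * (1 + real m * e)" by (simp add: algebra_simps)
          moreover have "1 + real m * e > 0" using that by (simp add: add_pos_nonneg)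
          ultimately show ?thesis using that by simp
        qed
        show ?thesis unfolding p_def ee qR by (rule gen) auto
      qed
      have sq: "sqrt (q R) = sqrt (real m) * exp (- (\<gamma> * R\<^sup>2))"
      proof -
        have "sqrt (exp (- (2 * \<gamma> * R\<^sup>2))) = exp (- (\<gamma> * R\<^sup>2))"
          by (rule real_sqrt_unique) (simp_all add: power2_eq_square exp_add[symmetric])
        then show ?thesis unfolding q_def m_def by (simp add: real_sqrt_mult)
      qed
      have "\<theta> R * (\<gamma> / 2) * R\<^sup>2 * exp (\<gamma> * R\<^sup>2) = sqrt (real m) * D * p * (1 - p)"
      proof -
        have "1 - p = q R / (1 + q R)" unfolding pq using q0[of R] by (simp add: field_simps)
        moreover have "exp (- (\<gamma> * R\<^sup>2)) * exp (\<gamma> * R\<^sup>2) = 1" by (simp add: exp_minus)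
        ultimately show ?thesis unfolding \<theta>_def sq pq D using q0[of R]
          by (simp add: field_simps power2_eq_square)
      qed
      then show ?thesis using LL nm by simp
    qed
  qed
  show ?thesis using th0 thlim main by blast
qed
end
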